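(* Let $\mathbf A\in\mathbb R^{m\times n}$ be a nonzero matrix of rank $r$ (full column rank or rank deficient) with smallest nonzero singular value $\sigma_r(\mathbf A)$, and let $\mathbf b\in\mathbb R^m$ be such that $\mathbf A\mathbf x=\mathbf b$ is consistent. Fix a row partition $\{\mathcal I_1,\dots,\mathcal I_s\}$ of $[m]$ and a column partition $\{\mathcal J_1,\dots,\mathcal J_t\}$ of $[n]$, let $\beta=\max_{(\mathcal I,\mathcal J)\in\mathcal P}\|\mathbf A_{\mathcal I,\mathcal J}\|_2^2/\|\mathbf A_{\mathcal I,\mathcal J}\|_F^2$ and $\rho=\max_{1\le j\le t}\sigma_1^2(\mathbf A_{:,\mathcal J_j})$. Let $\mathbf x^0\in\mathbb R^n$ be arbitrary and let $\mathbf x^k$ be the $k$th iterate of the doubly stochastic block Gauss--Seidel (DSBGS) algorithm with step size $\alpha$ described in the context. Then: (i) if $t=n$ and $0<\alpha<2\sigma_r^2(\mathbf A)/(\beta\|\mathbf A\|_F^2)$, then for every $k\ge0$ $$\mathbb E\big[\|\mathbf A\mathbf x^k-\mathbf b\|_2^2\big]\le\Big(1+\beta\alpha^2-\frac{2\alpha\sigma_r^2(\mathbf A)}{\|\mathbf A\|_F^2}\Big)^k\|\mathbf A\mathbf x^0-\mathbf b\|_2^2;$$ (ii) if $t<n$ and $0<\alpha<2\sigma_r^2(\mathbf A)/(t\rho\beta)$, then for every $k\ge0$ $$\mathbb E\big[\|\mathbf A\mathbf x^k-\mathbf b\|_2^2\big]\le\Big(1-\frac{2\alpha\sigma_r^2(\mathbf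 A)-t\rho\beta\alpha^2}{\|\mathbf A\|_F^2}\Big)^k\|\mathbf A\mathbf x^0-\mathbf b\|_2^2.$$
   Context: Notation: $\|\cdot\|_F$ the Frobenius norm, $\|\cdot\|_2$ the Euclidean norm for vectors and spectral norm for matrices, $\sigma_1(\cdot)$ the largest singular value. For $\mathcal I\subseteq[m]=\{1,\dots,m\}$ and $\mathcal J\subseteq[n]$, $\mathbf A_{\mathcal I,\mathcal J}$ is the submatrix of $\mathbf A$ with rows indexed by $\mathcal I$ and columns indexed by $\mathcal J$; $\mathbf A_{:,\mathcal J}$ is the column submatrix indexed by $\mathcal J$; $\mathbf I_{:,\mathcal J}$ denotes the columns of the identity matrix (of the appropriate order) indexed by $\mathcal J$. DSBGS algorithm: the sets $\mathcal I_1,\dots,\mathcal I_s$ are nonempty, pairwise disjoint with union $[m]$, and $\mathcal J_1,\dots,\mathcal J_t$ are nonempty, pairwise disjoint with union $[n]$; $\mathcal P=\{\mathcal I_1,\dots,\mathcal I_s\}\times\{\mathcal J_1,\dots,\mathcal J_t\}$ (in the definition of $\beta$ the maximum is over blocks with $\mathbf A_{\mathcal I,\mathcal J}\neq0$). Given $\alpha>0$ and $\mathbf x^0$, for $k=1,2,\dots$: pick $(\mathcal I,\mathcal J)\in\mathcal P$ (independently of previous choices) with probability $\|\mathbf A_{\mathcal I,\mathcal J}\|_F^2/\|\mathbf A\|_F^2$, and set $$\mathbf x^k=\mathbf x^{k-1}-\alpha\,\frac{\mathbf I_{:,\mathcal J}(\mathbf A_{\mathcal I,\mathcal J})^{T}(\mathbf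 I_{:,\mathcal I})^{T}}{\|\mathbf A_{\mathcal I,\mathcal J}\|_F^2}\,(\mathbf A\mathbf x^{k-1}-\mathbf b).$$ The expectation $\mathbb E$ is over the random choices of the blocks. *)

theory Defs
  imports "HOL-Analysis.Analysis" "HOL-Probability.Probability" "HOL-Library.Disjoint_Sets"
begin

text \<open>Matrices are elements of real^'n^'m (m rows indexed by the finite type 'm,
 n columns indexed by the finite type 'n).\<close>

definition frob_norm :: "real^'n^'m \<Rightarrow> real" where
  "frob_norm A = sqrt (\<Sum>i\<in>UNIV. \<Sum>j\<in>UNIV. (A $ i $ j)^2)"

definition singular_values :: "real^'n^'m \<Rightarrow> real set" where
  "singular_values A =
     sqrt ` {lam. \<exists>v. v \<noteq> 0 \<and> (transpose A ** A) *v v = lam *\<^sub>R v}"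

text \<open>Largest singular value (= spectral norm).\<close>
definition sigma_max :: "real^'n^'m \<Rightarrow> real" where
  "sigma_max A = Max (singular_values A)"

definition sigma_min_nz :: "real^'n^'m \<Rightarrow> real" where
  "sigma_min_nz A = Min (singular_values A - {0})"

text \<open>The block A_{I,J}, represented as the m x n matrix that agrees with A on
 I x J and is zero elsewhere (zero padding does not change the Frobenius norm,
 the spectral norm or the nonzero singular values).  In particular
 I_{:,J} (A_{I,J})^T (I_{:,I})^T = transpose (block A I J).\<close>
definition block :: "real^'n^'m \<Rightarrow> 'm set \<Rightarrow> 'n set \<Rightarrow> real^'n^'m" where
  "block A I J = (\<chi> i j. if i \<in> I \<and> j \<in> J then A $ i $ j else 0)"

definition dsbgs_beta :: "real^'n^'m \<Rightarrow> 'm set set \<Rightarrow> 'n set set \<Rightarrow> real" where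
  "dsbgs_beta A RP CP =
     Max {(sigma_max (block A I J))^2 / (frob_norm (block A I J))^2
          | I J. I \<in> RP \<and> J \<in> CP \<and> block A I J \<noteq> 0}"

definition dsbgs_rho :: "real^'n^'m \<Rightarrow> 'n set set \<Rightarrow> real" where
  "dsbgs_rho A CP = Max {(sigma_max (block A UNIV J))^2 | J. J \<in> CP}"

definition block_pmf :: "real^'n^'m \<Rightarrow> 'm set set \<Rightarrow> 'n set set \<Rightarrow> ('m set \<times> 'n set) pmf" where
  "block_pmf A RP CP = embed_pmf (\<lambda>(I, J).
     if I \<in> RP \<and> J \<in> CP then (frob_norm (block A I J))^2 / (frob_norm A)^2 else 0)"

definition dsbgs_step :: "real^'n^'m \<Rightarrow> real^'m \<Rightarrow> real \<Rightarrow> 'm set \<Rightarrow> 'n set \<Rightarrow> real^'n \<Rightarrow> real^'n" where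
  "dsbgs_step A b \<alpha> I J x =
     x - (\<alpha> / (frob_norm (block A I J))^2) *\<^sub>R (transpose (block A I J) *v (A *v x - b))"

primrec dsbgs_iter :: "real^'n^'m \<Rightarrow> real^'m \<Rightarrow> 'm set set \<Rightarrow> 'n set set \<Rightarrow> real
     \<Rightarrow> real^'n \<Rightarrow> nat \<Rightarrow> (real^'n) pmf" where
  "dsbgs_iter A b RP CP \<alpha> x0 0 = return_pmf x0"
| "dsbgs_iter A b RP CP \<alpha> x0 (Suc k) =
     bind_pmf (dsbgs_iter A b RP CP \<alpha> x0 k)
       (\<lambda>x. map_pmf (\<lambda>(I, J). dsbgs_step A b \<alpha> I J x) (block_pmf A RP CP))"

end

theory Submission
  imports Defs
begin


lemma quad_zero:
  fixes a b :: real
  assumes "\<forall>t. 0 \<le> a*t + b*t^2"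
  shows "a = 0"
proof (rule ccontr)
  assume a: "a \<noteq> 0"
  define c where "c = \<bar>b\<bar> + 1"
  have c: "c > 0" "b \<le> c - 1" unfolding c_def by auto
  have "0 \<le> a*(-a/c) + b*(-a/c)^2" using assms by blast
  also have "\<dots> = (a^2/c^2) * (b - c)"
    using c by (simp add: field_simps power2_eq_square)
  also have "\<dots> < 0"
    using a c by (intro mult_pos_neg) auto
  finally show False by simp
qed

lemma adj: "inner (C *v x) (y::real^'m) = inner (x::real^'n) (transpose C *v y)"
  using dot_lmul_matrix[of x "transpose C" y] by simp

lemma MtM: "(transpose C ** C) *v v = transpose C *v (C *v (v::real^'n))"
  by (simp add: matrix_vector_mul_assoc)

lemma MtM_inner: "inner ((transpose C ** C) *v v) u = inner (C *v v) (C *v (u::real^'n))"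
  by (simp add: MtM adj inner_commute)

lemma norm_expand:
  fixes a b :: "'a::real_inner"
  shows "(norm (a + t *\<^sub>R b))^2 = (norm a)^2 + 2*t*inner a b + t^2 * (norm b)^2"
  unfolding power2_norm_eq_inner
  by (simp add: inner_add_left inner_add_right inner_commute algebra_simps power2_eq_square)

lemma stationary:
  fixes D :: "real^'a^'b" and W :: "(real^'a) set"
  assumes "subspace W" "w \<in> W" "\<forall>x\<in>W. 0 \<le> s * ((norm (D *v x))^2 - l * (norm x)^2)"
    "(norm (D *v w))^2 = l * (norm w)^2" "(transpose D ** D) *v w \<in> W" "s \<noteq> 0"
  shows "(transpose D ** D) *v w = l *\<^sub>R w"
proof -
  have key: "inner (D *v w) (D *v u) = l * inner w u" if u: "u \<in> W" for u
  proof -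
    have "\<forall>t. 0 \<le> (2 * s * (inner (D *v w) (D *v u) - l * inner w u))*t
        + (s * ((norm (D *v u))^2 - l*(norm u)^2))*t^2"
    proof
      fix t
      have "w + t *\<^sub>R u \<in> W" using assms(1,2) u
        by (simp add: subspace_add subspace_scale)
      hence "0 \<le> s * ((norm (D *v (w + t *\<^sub>R u)))^2 - l * (norm (w + t *\<^sub>R u))^2)"
        using assms(3) by blast
      also have "\<dots> = (2 * s * (inner (D *v w) (D *v u) - l * inner w u))*t
        + (s * ((norm (D *v u))^2 - l*(norm u)^2))*t^2
        + s * ((norm (D *v w))^2 - l*(norm w)^2)"
        by (simp add: norm_expand matrix_vector_right_distrib matrix_vector_mult_scaleR
             inner_commute algebra_simps)
      finally show "0 \<le> (2 * s * (inner (D *v w) (D *v u) - l * inner w u))*t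
        + (s * ((norm (D *v u))^2 - l*(norm u)^2))*t^2" using assms(4) by simp
    qed
    from quad_zero[OF this] assms(6) show ?thesis by simp
  qed
  define z where "z = (transpose D ** D) *v w - l *\<^sub>R w"
  have zW: "z \<in> W" unfolding z_def using assms(1,2,5) by (simp add: subspace_diff subspace_scale)
  have "inner z z = inner ((transpose D ** D) *v w) z - l * inner w z"
    unfolding z_def by (simp add: inner_diff_left)
  also have "\<dots> = 0" using key[OF zW] by (simp add: MtM_inner)
  finally show ?thesis unfolding z_def by simp
qed

definition EV :: "real^'n^'m \<Rightarrow> real set" where
  "EV C = {lam. \<exists>v. v \<noteq> 0 \<and> (transpose C ** C) *v v = lam *\<^sub>R v}"

lemma SV_EV: "singular_values C = sqrt ` EV C"
  unfolding singular_values_def EV_def by simp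

lemma EV_nonneg: "lam \<in> EV C \<Longrightarrow> 0 \<le> lam"
proof -
  assume "lam \<in> EV C"
  then obtain v where v: "v \<noteq> 0" "(transpose C ** C) *v v = lam *\<^sub>R v" unfolding EV_def by auto
  have "lam * inner v v = inner ((transpose C ** C) *v v) v" using v by simp
  also have "\<dots> = inner (C *v v) (C *v v)" by (simp add: MtM_inner)
  finally have "0 \<le> lam * inner v v" by simp
  moreover have "0 < inner v v" using v by simp
  ultimately show ?thesis by (simp add: zero_le_mult_iff)
qed

lemma finite_EV: "finite (EV C)"
proof -
  define vf where "vf lam = (SOME v. v \<noteq> 0 \<and> (transpose C ** C) *v v = lam *\<^sub>R v)" for lam
  have vf: "vf lam \<noteq> 0 \<and> (transpose C ** C) *v vf lam = lam *\<^sub>R vf lam" if "lam \<in> EV C" for lam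
  proof -
    have "\<exists>v. v \<noteq> 0 \<and> (transpose C ** C) *v v = lam *\<^sub>R v" using that unfolding EV_def by simp
    from someI_ex[OF this] show ?thesis unfolding vf_def .
  qed
  have inj: "inj_on vf (EV C)"
  proof (rule inj_onI)
    fix x y assume xy: "x \<in> EV C" "y \<in> EV C" "vf x = vf y"
    have "x *\<^sub>R vf x = (transpose C ** C) *v vf x" using vf[OF xy(1)] by simp
    also have "\<dots> = (transpose C ** C) *v vf y" using xy(3) by simp
    also have "\<dots> = y *\<^sub>R vf y" using vf[OF xy(2)] by simp
    finally have "x *\<^sub>R vf x = y *\<^sub>R vf x" using xy(3) by simp
    thus "x = y" using vf[OF xy(1)] by (simp only: scaleR_cancel_right) simp
  qed
  have orth: "pairwise orthogonal (vf ` EV C)"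
  proof (rule pairwiseI)
    fix a b assume ab: "a \<in> vf ` EV C" "b \<in> vf ` EV C" "a \<noteq> b"
    then obtain x y where xy: "x \<in> EV C" "y \<in> EV C" "a = vf x" "b = vf y" by auto
    have "x \<noteq> y" using ab(3) xy(3,4) by blast
    have "x * inner a b = inner ((transpose C ** C) *v a) b" using vf[OF xy(1)] xy(3) by simp
    also have "\<dots> = inner (C *v a) (C *v b)" by (rule MtM_inner)
    also have "\<dots> = inner ((transpose C ** C) *v b) a" by (subst MtM_inner) (rule inner_commute)
    also have "\<dots> = inner a ((transpose C ** C) *v b)" by (rule inner_commute)
    also have "\<dots> = y * inner a b" using vf[OF xy(2)] xy(4) by simp
    finally have "(x - y) * inner a b = 0" by (simp add: algebra_simps)
    thus "orthogonal a b" using \<open>x \<noteq> y\<close> by (simp add: orthogonal_def)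
  qed
  have "0 \<notin> vf ` EV C" using vf by auto
  hence "independent (vf ` EV C)" using orth pairwise_orthogonal_independent by blast
  hence "finite (vf ` EV C)" using independent_bound by blast
  thus ?thesis using inj finite_imageD by blast
qed

lemma finite_SV: "finite (singular_values C)"
  by (simp add: SV_EV finite_EV)

lemma SV_nonneg: "x \<in> singular_values C \<Longrightarrow> 0 \<le> x"
  by (auto simp: SV_EV dest: EV_nonneg)

lemma sigma_max_bound:
  fixes C :: "real^'n^'m"
  shows "(norm (C *v x))^2 \<le> (sigma_max C)^2 * (norm x)^2" and "0 \<le> sigma_max C"
proof -
  have "compact (sphere (0::real^'n) 1)" by simp
  moreover have "sphere (0::real^'n) 1 \<noteq> {}" by simp
  moreover have "continuous_on (sphere (0::real^'n) 1) (\<lambda>x. (norm (C *v x))^2)"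
    by (intro continuous_intros)
  ultimately obtain w where w: "w \<in> sphere 0 1"
    "\<forall>y\<in>sphere 0 1. (norm (C *v y))^2 \<le> (norm (C *v w))^2"
    using continuous_attains_sup[of "sphere (0::real^'n) 1" "\<lambda>x. (norm (C *v x))^2"] by blast
  define l where "l = (norm (C *v w))^2"
  have bnd: "(norm (C *v x))^2 \<le> l * (norm x)^2" for x
  proof (cases "x = 0")
    case False
    define c where "c = inverse (norm x)"
    have c: "c * norm x = 1" "c > 0" using False unfolding c_def by auto
    have "c *\<^sub>R x \<in> sphere 0 1" using c by (simp add: norm_scaleR)
    hence "(norm (C *v (c *\<^sub>R x)))^2 \<le> l" using w unfolding l_def by blast
    hence "c^2 * (norm (C *v x))^2 \<le> l"
      by (simp add: matrix_vector_mult_scaleR norm_scaleR power_mult_distrib)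
    hence "(norm x)^2 * (c^2 * (norm (C *v x))^2) \<le> (norm x)^2 * l"
      by (simp add: mult_left_mono)
    moreover have "(norm x)^2 * (c^2 * (norm (C *v x))^2) = (c * norm x)^2 * (norm (C *v x))^2"
      by (simp add: power_mult_distrib)
    ultimately show ?thesis using c by (simp add: mult.commute)
  qed simp
  have "(transpose C ** C) *v w = l *\<^sub>R w"
  proof (rule stationary[where W=UNIV and s="-1"])
    show "\<forall>x\<in>UNIV. 0 \<le> -1 * ((norm (C *v x))^2 - l * (norm x)^2)" using bnd by simp
    show "(norm (C *v w))^2 = l * (norm w)^2" using w by (simp add: l_def)
  qed auto
  moreover have "w \<noteq> 0" using w by auto
  ultimately have "l \<in> EV C" unfolding EV_def by blast
  hence "sqrt l \<in> singular_values C" by (simp add: SV_EV)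
  hence le: "sqrt l \<le> sigma_max C" unfolding sigma_max_def using finite_SV[of C] by (rule Max_ge[rotated])
  have l0: "0 \<le> l" unfolding l_def by simp
  show "0 \<le> sigma_max C" using le l0 by (meson order_trans real_sqrt_ge_zero)
  have "(sqrt l)^2 \<le> (sigma_max C)^2" using le l0 by (intro power_mono) auto
  hence "l \<le> (sigma_max C)^2" using l0 by simp
  thus "(norm (C *v x))^2 \<le> (sigma_max C)^2 * (norm x)^2"
    using bnd[of x] by (meson mult_right_mono order_trans zero_le_power2)
qed

lemma sigma_max_bound_T:
  fixes C :: "real^'n^'m"
  shows "(norm (transpose C *v y))^2 \<le> (sigma_max C)^2 * (norm y)^2"
proof -
  define z where "z = transpose C *v y"
  define s where "s = sigma_max C"
  have s0: "0 \<le> s" unfolding s_def by (rule sigma_max_bound(2))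
  have Cz: "norm (C *v z) \<le> s * norm z"
  proof -
    have "(norm (C *v z))^2 \<le> (s * norm z)^2"
      using sigma_max_bound(1)[of C z] unfolding s_def by (simp only: power_mult_distrib)
    from power2_le_imp_le[OF this] show ?thesis using s0 by simp
  qed
  have "(norm z)^2 = inner z (transpose C *v y)" unfolding z_def by (simp only: power2_norm_eq_inner)
  also have "\<dots> = inner (C *v z) y" by (rule adj[symmetric])
  also have "\<dots> \<le> norm (C *v z) * norm y" by (rule norm_cauchy_schwarz)
  also have "\<dots> \<le> (s * norm z) * norm y" using Cz by (rule mult_right_mono) simp
  finally have f: "(norm z)^2 \<le> (s * norm z) * norm y" .
  have e: "(s * norm z) * norm y = (s * norm y) * norm z" by (simp only: mult.assoc mult.commute[of "norm z" "norm y"])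
  have *: "norm z * norm z \<le> (s * norm y) * norm z" using f unfolding e power2_eq_square .
  have "norm z \<le> s * norm y"
  proof (cases "norm z = 0")
    case True thus ?thesis using s0 by simp
  next
    case False
    hence "0 < norm z" by simp
    show ?thesis using mult_right_le_imp_le[OF * \<open>0 < norm z\<close>] .
  qed
  hence "(norm z)^2 \<le> (s * norm y)^2" by (intro power_mono) auto
  thus ?thesis unfolding z_def s_def by (simp only: power_mult_distrib)
qed

lemma range_subspace: "subspace (range (\<lambda>x. (A::real^'n^'m) *v x))"
  unfolding subspace_def
proof (intro conjI ballI allI)
  show "0 \<in> range (\<lambda>x. A *v x)" by (rule range_eqI[of _ _ 0]) simp
next
  fix u v assume "u \<in> range (\<lambda>x. A *v x)" "v \<in> range (\<lambda>x. A *v x)"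
  then obtain x y where "u = A *v x" "v = A *v y" by auto
  thus "u + v \<in> range (\<lambda>x. A *v x)" by (intro range_eqI[of _ _ "x + y"]) (simp add: matrix_vector_right_distrib)
next
  fix c :: real and u assume "u \<in> range (\<lambda>x. A *v x)"
  then obtain x where "u = A *v x" by auto
  thus "c *\<^sub>R u \<in> range (\<lambda>x. A *v x)" by (intro range_eqI[of _ _ "c *\<^sub>R x"]) (simp add: matrix_vector_mult_scaleR)
qed

lemma sigma_min_bound:
  fixes A :: "real^'n^'m"
  assumes A: "A \<noteq> 0" and r: "r \<in> range (\<lambda>x. A *v x)"
  shows "(sigma_min_nz A)^2 * (norm r)^2 \<le> (norm (transpose A *v r))^2"
proof -
  define W where "W = range (\<lambda>x. A *v x)"
  have sW: "subspace W" unfolding W_def by (rule range_subspace)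
  have "closed W" using sW by (rule closed_subspace)
  hence cK: "compact (W \<inter> sphere 0 1)" by (intro closed_Int_compact) simp_all
  obtain x0 where x0: "A *v x0 \<noteq> 0" using A matrix_eq[of A 0] by auto
  have "(inverse (norm (A *v x0))) *\<^sub>R (A *v x0) \<in> W \<inter> sphere 0 1"
    using x0 sW unfolding W_def by (auto simp: norm_scaleR subspace_scale)
  hence neK: "W \<inter> sphere 0 1 \<noteq> {}" by blast
  have "continuous_on (W \<inter> sphere 0 1) (\<lambda>x. (norm (transpose A *v x))^2)"
    by (intro continuous_intros)
  then obtain w where w: "w \<in> W \<inter> sphere 0 1"
    "\<forall>y\<in>W \<inter> sphere 0 1. (norm (transpose A *v w))^2 \<le> (norm (transpose A *v y))^2"
    using continuous_attains_inf[OF cK neK] by blast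
  define l where "l = (norm (transpose A *v w))^2"
  have bnd: "l * (norm x)^2 \<le> (norm (transpose A *v x))^2" if xW: "x \<in> W" for x
  proof (cases "x = 0")
    case False
    define c where "c = inverse (norm x)"
    have c: "c * norm x = 1" "c > 0" using False unfolding c_def by auto
    have "c *\<^sub>R x \<in> W \<inter> sphere 0 1" using c xW sW by (simp add: norm_scaleR subspace_scale)
    hence "l \<le> (norm (transpose A *v (c *\<^sub>R x)))^2" using w unfolding l_def by blast
    hence "l \<le> c^2 * (norm (transpose A *v x))^2"
      by (simp add: matrix_vector_mult_scaleR norm_scaleR power_mult_distrib)
    hence "(norm x)^2 * l \<le> (norm x)^2 * (c^2 * (norm (transpose A *v x))^2)"
      by (simp add: mult_left_mono)
    also have "(norm x)^2 * (c^2 * (norm (transpose A *v x))^2) = (c * norm x)^2 * (norm (transpose A *v x))^2"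
      by (simp add: power_mult_distrib)
    also have "\<dots> = (norm (transpose A *v x))^2" using c(1) by simp
    finally show ?thesis by (simp add: mult.commute)
  qed simp
  have MW: "(transpose (transpose A) ** transpose A) *v u = A *v (transpose A *v u)" for u
    by (simp only: transpose_transpose matrix_vector_mul_assoc)
  have eig: "(transpose (transpose A) ** transpose A) *v w = l *\<^sub>R w"
  proof (rule stationary[where W=W and s=1])
    show "\<forall>x\<in>W. 0 \<le> 1 * ((norm (transpose A *v x))^2 - l * (norm x)^2)" using bnd by simp
    show "(norm (transpose A *v w))^2 = l * (norm w)^2" using w by (simp add: l_def)
    show "(transpose (transpose A) ** transpose A) *v w \<in> W" unfolding MW W_def by simp
  qed (use sW w in auto)
  hence eig': "A *v (transpose A *v w) = l *\<^sub>R w" by (simp only: MW)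
  have l0: "0 \<le> l" unfolding l_def by simp
  have lpos: "0 < l"
  proof (rule ccontr)
    assume "\<not> 0 < l"
    hence "l = 0" using l0 by simp
    hence Tw: "transpose A *v w = 0" unfolding l_def by simp
    obtain y where y: "w = A *v y" using w unfolding W_def by auto
    have "inner w w = inner (A *v y) w" using y by simp
    also have "\<dots> = inner y (transpose A *v w)" by (rule adj)
    also have "\<dots> = 0" using Tw by simp
    finally show False using w by simp
  qed
  define v where "v = transpose A *v w"
  have "(norm v)^2 = l" unfolding v_def l_def ..
  hence v0: "v \<noteq> 0" using lpos by auto
  have "(transpose A ** A) *v v = transpose A *v (A *v v)" by (simp add: matrix_vector_mul_assoc)
  also have "\<dots> = l *\<^sub>R v" unfolding v_def eig' by (simp add: matrix_vector_mult_scaleR)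
  finally have "l \<in> EV A" using v0 unfolding EV_def by blast
  hence slS: "sqrt l \<in> singular_values A - {0}" using lpos by (simp add: SV_EV)
  have finS: "finite (singular_values A - {0})" using finite_SV by simp
  have le: "sigma_min_nz A \<le> sqrt l" unfolding sigma_min_nz_def using finS slS by (rule Min_le)
  have "sigma_min_nz A \<in> singular_values A - {0}" unfolding sigma_min_nz_def
    using finS slS by (intro Min_in) auto
  hence s0: "0 \<le> sigma_min_nz A" using SV_nonneg by blast
  have "(sigma_min_nz A)^2 \<le> (sqrt l)^2" using le s0 by (rule power_mono)
  hence "(sigma_min_nz A)^2 \<le> l" using l0 by simp
  hence "(sigma_min_nz A)^2 * (norm r)^2 \<le> l * (norm r)^2" by (rule mult_right_mono) simp
  also have "\<dots> \<le> (norm (transpose A *v r))^2" using bnd r unfolding W_def by blast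
  finally show ?thesis .
qed



lemma exp_bind_pmf:
  fixes \<phi> :: "'b \<Rightarrow> real"
  assumes nn: "\<And>y. 0 \<le> \<phi> y" and fin: "\<And>x. finite (set_pmf (N x))"
  shows "measure_pmf.expectation (bind_pmf M N) \<phi>
       = measure_pmf.expectation M (\<lambda>x. measure_pmf.expectation (N x) \<phi>)"
proof -
  have "measure_pmf.expectation (bind_pmf M N) \<phi> = enn2real (\<integral>\<^sup>+ y. ennreal (\<phi> y) \<partial>bind_pmf M N)"
    by (rule integral_eq_nn_integral) (auto simp: nn)
  also have "\<dots> = enn2real (\<integral>\<^sup>+ x. \<integral>\<^sup>+ y. ennreal (\<phi> y) \<partial>N x \<partial>M)"
    by simp
  also have "\<dots> = enn2real (\<integral>\<^sup>+ x. ennreal (measure_pmf.expectation (N x) \<phi>) \<partial>M)"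
  proof -
    have "(\<integral>\<^sup>+ y. ennreal (\<phi> y) \<partial>N x) = ennreal (measure_pmf.expectation (N x) \<phi>)" for x
      by (rule nn_integral_eq_integral) (auto simp: nn intro: integrable_measure_pmf_finite fin)
    thus ?thesis by simp
  qed
  also have "\<dots> = measure_pmf.expectation M (\<lambda>x. measure_pmf.expectation (N x) \<phi>)"
    by (rule integral_eq_nn_integral[symmetric]) (auto simp: nn)
  finally show ?thesis .
qed

lemma part_finite: "finite (P :: ('a::finite) set set)"
  by simp

lemma part_sum:
  fixes P :: "('a::finite) set set"
  assumes "partition_on UNIV P"
  shows "(\<Sum>I\<in>P. \<Sum>i\<in>I. f i) = (\<Sum>i\<in>UNIV. f i)"
proof -
  have U: "\<Union>P = UNIV" and d: "disjoint P" using assms unfolding partition_on_def by auto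
  have "(\<Sum>i\<in>\<Union>P. f i) = (\<Sum>I\<in>P. \<Sum>i\<in>I. f i)"
  proof -
    have "\<forall>A\<in>P. \<forall>B\<in>P. A \<noteq> B \<longrightarrow> A \<inter> B = {}"
      using d by (auto simp: disjoint_def disjnt_def pairwise_def)
    from sum.Union_disjoint[OF _ this, of f] show ?thesis by simp
  qed
  thus ?thesis using U by simp
qed

lemma sum_if_in: "(\<Sum>x\<in>(UNIV::'a::finite set). if x \<in> I then f x else 0) = sum f I"
  by (simp add: sum.inter_restrict[symmetric])

lemma sum_block:
  "(\<Sum>i\<in>(UNIV::'a::finite set). \<Sum>j\<in>(UNIV::'b::finite set). if i \<in> I \<and> j \<in> J then h i j else (0::real))
   = (\<Sum>i\<in>I. \<Sum>j\<in>J. h i j)"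
proof -
  have "(\<Sum>i\<in>I. \<Sum>j\<in>J. h i j) = (\<Sum>i\<in>UNIV. if i \<in> I then (\<Sum>j\<in>UNIV. if j \<in> J then h i j else 0) else 0)"
    by (simp only: sum_if_in)
  also have "\<dots> = (\<Sum>i\<in>UNIV. \<Sum>j\<in>UNIV. if i \<in> I \<and> j \<in> J then h i j else 0)"
    by (intro sum.cong refl) auto
  finally show ?thesis by simp
qed

lemma sum_blocks:
  fixes RP :: "('a::finite) set set" and CP :: "('b::finite) set set"
  assumes "partition_on UNIV RP" "partition_on UNIV CP"
  shows "(\<Sum>I\<in>RP. \<Sum>J\<in>CP. \<Sum>i\<in>I. \<Sum>j\<in>J. h i j) = (\<Sum>i\<in>UNIV. \<Sum>j\<in>UNIV. (h i j :: real))"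
proof -
  have "(\<Sum>I\<in>RP. \<Sum>J\<in>CP. \<Sum>i\<in>I. \<Sum>j\<in>J. h i j) = (\<Sum>I\<in>RP. \<Sum>i\<in>I. \<Sum>J\<in>CP. \<Sum>j\<in>J. h i j)"
    by (rule sum.cong[OF refl], rule sum.swap)
  also have "\<dots> = (\<Sum>I\<in>RP. \<Sum>i\<in>I. \<Sum>j\<in>UNIV. h i j)"
    by (simp add: part_sum[OF assms(2)])
  also have "\<dots> = (\<Sum>i\<in>UNIV. \<Sum>j\<in>UNIV. h i j)"
    by (simp add: part_sum[OF assms(1)])
  finally show ?thesis .
qed

lemma frob_sq: "(frob_norm C)^2 = (\<Sum>i\<in>UNIV. \<Sum>j\<in>UNIV. (C$i$j)^2)"
  by (simp add: frob_norm_def sum_nonneg)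

lemma block_frob: "(frob_norm (block A I J))^2 = (\<Sum>i\<in>I. \<Sum>j\<in>J. (A$i$j)^2)"
proof -
  have "(frob_norm (block A I J))^2 = (\<Sum>i\<in>UNIV. \<Sum>j\<in>UNIV. if i \<in> I \<and> j \<in> J then (A$i$j)^2 else 0)"
    unfolding frob_sq block_def by (intro sum.cong refl) auto
  thus ?thesis by (simp only: sum_block)
qed

lemma block_univ: "block A UNIV UNIV = A"
  by (simp add: block_def vec_eq_iff)

lemma inner_block: "inner (transpose (block A I J) *v r) v = (\<Sum>i\<in>I. \<Sum>j\<in>J. r$i * A$i$j * v$j)"
proof -
  have "inner (transpose (block A I J) *v r) v = inner r (block A I J *v v)"
    using adj[of "transpose (block A I J)" r v] by (simp only: transpose_transpose)
  also have "\<dots> = (\<Sum>i\<in>UNIV. \<Sum>j\<in>UNIV. if i \<in> I \<and> j \<in> J then r$i * A$i$j * v$j else 0)"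
    unfolding inner_vec_def matrix_vector_mult_def block_def
    by (auto simp: sum_distrib_left intro!: sum.cong)
  finally show ?thesis by (simp only: sum_block)
qed

definition rI :: "'m set \<Rightarrow> real^'m \<Rightarrow> real^'m" where
  "rI I r = (\<chi> i. if i \<in> I then r$i else 0)"

lemma Y_rI: "transpose (block A I J) *v r = transpose (block A I J) *v rI I r"
  unfolding rI_def block_def by (auto simp: vec_eq_iff matrix_vector_mult_def transpose_def intro!: sum.cong)

lemma norm_sq_vec: "(norm (x::real^'a))^2 = (\<Sum>i\<in>UNIV. (x$i)^2)"
  unfolding power2_norm_eq_inner inner_vec_def by (simp add: power2_eq_square)

lemma norm_rI: "(norm (rI I r))^2 = (\<Sum>i\<in>I. (r$i)^2)"
proof -
  have "(norm (rI I r))^2 = (\<Sum>i\<in>UNIV. if i \<in> I then (r$i)^2 else 0)"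
    unfolding norm_sq_vec rI_def by (intro sum.cong refl) auto
  thus ?thesis by (simp only: sum_if_in)
qed

lemma Y_supp: "j \<notin> J \<Longrightarrow> (transpose (block A I J) *v r) $ j = 0"
  unfolding block_def by (simp add: matrix_vector_mult_def transpose_def)

lemma A_col:
  assumes "\<And>j. j \<notin> J \<Longrightarrow> y$j = 0"
  shows "A *v y = block A UNIV J *v y"
  unfolding block_def using assms by (auto simp: vec_eq_iff matrix_vector_mult_def intro!: sum.cong)

lemma frob_bound: "(norm (C *v y))^2 \<le> (frob_norm C)^2 * (norm (y::real^'n))^2"
proof -
  have "(norm (C *v y))^2 = (\<Sum>i\<in>UNIV. (\<Sum>j\<in>UNIV. C$i$j * y$j)^2)"
    unfolding norm_sq_vec by (simp add: matrix_vector_mult_def)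
  also have "\<dots> \<le> (\<Sum>i\<in>UNIV. (\<Sum>j\<in>UNIV. (C$i$j)^2) * (\<Sum>j\<in>UNIV. (y$j)^2))"
    by (intro sum_mono Cauchy_Schwarz_ineq_sum)
  also have "\<dots> = (frob_norm C)^2 * (norm y)^2"
    unfolding frob_sq norm_sq_vec by (simp add: sum_distrib_right)
  finally show ?thesis .
qed



lemma finite_iter: "finite (set_pmf (dsbgs_iter A b RP CP \<alpha> x0 k))"
proof (induction k)
  case 0 thus ?case by simp
next
  case (Suc k)
  have "finite (set_pmf (block_pmf A RP CP))" by (rule finite_subset[OF subset_UNIV]) simp
  thus ?case using Suc by simp
qed

lemma iter_bound:
  fixes A :: "real^'n^'m" and b :: "real^'m"
  defines "\<phi> \<equiv> \<lambda>x. (norm (A *v x - b))^2"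
  assumes step: "\<And>x. measure_pmf.expectation (block_pmf A RP CP)
      (\<lambda>p. \<phi> ((\<lambda>(I, J). dsbgs_step A b \<alpha> I J x) p)) \<le> c * \<phi> x"
  shows "measure_pmf.expectation (dsbgs_iter A b RP CP \<alpha> x0 k) \<phi> \<le> c^k * \<phi> x0"
proof -
  have nn: "\<And>x. 0 \<le> \<phi> x" unfolding \<phi>_def by simp
  have finB: "finite (set_pmf (block_pmf A RP CP))" by (rule finite_subset[OF subset_UNIV]) simp
  have rec: "measure_pmf.expectation (dsbgs_iter A b RP CP \<alpha> x0 (Suc k)) \<phi>
      \<le> c * measure_pmf.expectation (dsbgs_iter A b RP CP \<alpha> x0 k) \<phi>" for k
  proof -
    let ?M = "dsbgs_iter A b RP CP \<alpha> x0 k"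
    let ?N = "\<lambda>x. map_pmf (\<lambda>(I, J). dsbgs_step A b \<alpha> I J x) (block_pmf A RP CP)"
    have "measure_pmf.expectation (dsbgs_iter A b RP CP \<alpha> x0 (Suc k)) \<phi>
        = measure_pmf.expectation ?M (\<lambda>x. measure_pmf.expectation (?N x) \<phi>)"
      by (simp only: dsbgs_iter.simps) (rule exp_bind_pmf[OF nn], simp add: finB)
    also have "\<dots> = measure_pmf.expectation ?M (\<lambda>x. measure_pmf.expectation (block_pmf A RP CP)
      (\<lambda>p. \<phi> ((\<lambda>(I, J). dsbgs_step A b \<alpha> I J x) p)))"
      by (simp only: integral_map_pmf)
    also have "\<dots> \<le> measure_pmf.expectation ?M (\<lambda>x. c * \<phi> x)"
      by (rule integral_mono) (auto intro: integrable_measure_pmf_finite finite_iter step)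
    also have "\<dots> = c * measure_pmf.expectation ?M \<phi>" by simp
    finally show ?thesis .
  qed
  have E0: "0 \<le> measure_pmf.expectation (dsbgs_iter A b RP CP \<alpha> x0 k) \<phi>" for k
    by (rule integral_nonneg_AE) (simp add: nn)
  show ?thesis
  proof (cases "0 \<le> c")
    case True
    show ?thesis
    proof (induction k)
      case 0 thus ?case unfolding \<phi>_def by simp
    next
      case (Suc k)
      have "c * measure_pmf.expectation (dsbgs_iter A b RP CP \<alpha> x0 k) \<phi> \<le> c * (c^k * \<phi> x0)"
        using Suc True by (rule mult_left_mono)
      thus ?case using rec[of k] by simp
    qed
  next
    case False
    have "0 \<le> measure_pmf.expectation (block_pmf A RP CP)
      (\<lambda>p. \<phi> ((\<lambda>(I, J). dsbgs_step A b \<alpha> I J x0) p))"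
      by (rule integral_nonneg_AE) (simp add: nn)
    hence "0 \<le> c * \<phi> x0" using step[of x0] by linarith
    hence z: "\<phi> x0 = 0" using False nn[of x0] by (auto simp: zero_le_mult_iff)
    have "measure_pmf.expectation (dsbgs_iter A b RP CP \<alpha> x0 k) \<phi> = 0"
    proof (induction k)
      case 0 thus ?case using z by simp
    next
      case (Suc k)
      thus ?case using rec[of k] E0[of "Suc k"] by simp
    qed
    thus ?thesis using z by simp
  qed
qed

lemma frob_zero: "frob_norm C = 0 \<Longrightarrow> C = 0"
proof -
  assume "frob_norm C = 0"
  hence "(\<Sum>i\<in>UNIV. \<Sum>j\<in>UNIV. (C$i$j)^2) = 0" using frob_sq[of C] by simp
  hence "\<forall>i\<in>UNIV. (\<Sum>j\<in>UNIV. (C$i$j)^2) = 0"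
    by (subst (asm) sum_nonneg_eq_0_iff) (auto intro: sum_nonneg)
  hence "\<forall>i j. (C$i$j)^2 = 0"
    by (auto simp: sum_nonneg_eq_0_iff)
  thus "C = 0" by (simp add: vec_eq_iff)
qed

lemma frob_pos: "A \<noteq> 0 \<Longrightarrow> 0 < (frob_norm A)^2"
proof -
  assume "A \<noteq> 0"
  hence "frob_norm A \<noteq> 0" using frob_zero by blast
  thus ?thesis by simp
qed

lemma total_F:
  assumes "partition_on UNIV RP" "partition_on UNIV CP"
  shows "(\<Sum>I\<in>RP. \<Sum>J\<in>CP. (frob_norm (block A I J))^2) = (frob_norm A)^2"
  unfolding block_frob by (simp only: frob_sq sum_blocks[OF assms])

lemma pmf_block:
  assumes A: "A \<noteq> 0" and P: "partition_on UNIV RP" "partition_on UNIV CP"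
  shows "pmf (block_pmf A RP CP) (I, J) =
    (if I \<in> RP \<and> J \<in> CP then (frob_norm (block A I J))^2 / (frob_norm A)^2 else 0)"
proof -
  define f where "f = (\<lambda>(I, J). if I \<in> RP \<and> J \<in> CP then (frob_norm (block A I J))^2 / (frob_norm A)^2 else 0)"
  have nn: "\<And>x. 0 \<le> f x" unfolding f_def by (auto split: prod.splits)
  have f_eq: "f = (\<lambda>x. if x \<in> RP \<times> CP then (\<lambda>(I, J). (frob_norm (block A I J))^2 / (frob_norm A)^2) x else 0)"
    unfolding f_def by (auto split: prod.splits)
  have "(\<Sum>x\<in>UNIV. f x) = (\<Sum>x\<in>RP \<times> CP. (\<lambda>(I, J). (frob_norm (block A I J))^2 / (frob_norm A)^2) x)"
    unfolding f_eq by (rule sum_if_in)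
  also have "\<dots> = (\<Sum>I\<in>RP. \<Sum>J\<in>CP. (frob_norm (block A I J))^2 / (frob_norm A)^2)"
    by (simp add: sum.cartesian_product)
  also have "\<dots> = (\<Sum>I\<in>RP. \<Sum>J\<in>CP. (frob_norm (block A I J))^2) / (frob_norm A)^2"
    by (simp add: sum_divide_distrib)
  also have "\<dots> = 1" using total_F[OF P, of A] frob_pos[OF A] by simp
  finally have s1: "(\<Sum>x\<in>UNIV. f x) = 1" .
  have "(\<integral>\<^sup>+x. ennreal (f x) \<partial>count_space UNIV) = (\<Sum>x\<in>UNIV. ennreal (f x))"
    by (rule nn_integral_count_space_finite) simp
  also have "\<dots> = ennreal (\<Sum>x\<in>UNIV. f x)" using nn by simp
  finally have int1: "(\<integral>\<^sup>+x. ennreal (f x) \<partial>count_space UNIV) = 1" using s1 by simp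
  have "pmf (block_pmf A RP CP) (I, J) = f (I, J)"
    unfolding block_pmf_def f_def[symmetric] by (rule pmf_embed_pmf[OF nn int1])
  thus ?thesis unfolding f_def by simp
qed

lemma beta_facts:
  fixes A :: "real^'n^'m"
  assumes A: "A \<noteq> 0" and P: "partition_on UNIV RP" "partition_on UNIV CP"
  shows "\<And>I J. I \<in> RP \<Longrightarrow> J \<in> CP \<Longrightarrow> block A I J \<noteq> 0 \<Longrightarrow>
      (sigma_max (block A I J))^2 \<le> dsbgs_beta A RP CP * (frob_norm (block A I J))^2"
    and "0 \<le> dsbgs_beta A RP CP"
proof -
  define S where "S = {(sigma_max (block A I J))^2 / (frob_norm (block A I J))^2
          | I J. I \<in> RP \<and> J \<in> CP \<and> block A I J \<noteq> 0}"
  have "S \<subseteq> (\<lambda>(I, J). (sigma_max (block A I J))^2 / (frob_norm (block A I J))^2) ` UNIV"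
    unfolding S_def by auto
  hence finS: "finite S" by (rule finite_subset) simp
  have mem: "(sigma_max (block A I J))^2 \<le> dsbgs_beta A RP CP * (frob_norm (block A I J))^2"
    if IJ: "I \<in> RP" "J \<in> CP" "block A I J \<noteq> 0" for I J
  proof -
    have "(sigma_max (block A I J))^2 / (frob_norm (block A I J))^2 \<in> S" unfolding S_def using IJ by blast
    hence "(sigma_max (block A I J))^2 / (frob_norm (block A I J))^2 \<le> dsbgs_beta A RP CP"
      unfolding dsbgs_beta_def S_def[symmetric] using finS by simp
    moreover have "0 < (frob_norm (block A I J))^2" using frob_pos[OF IJ(3)] .
    ultimately show ?thesis by (simp add: divide_le_eq)
  qed
  thus "\<And>I J. I \<in> RP \<Longrightarrow> J \<in> CP \<Longrightarrow> block A I J \<noteq> 0 \<Longrightarrow>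
      (sigma_max (block A I J))^2 \<le> dsbgs_beta A RP CP * (frob_norm (block A I J))^2" by blast
  obtain i0 j0 where ij: "A$i0$j0 \<noteq> 0" using A by (auto simp: vec_eq_iff)
  have "\<Union>RP = UNIV" "\<Union>CP = UNIV" using P unfolding partition_on_def by auto
  then obtain I0 J0 where I0: "I0 \<in> RP" "i0 \<in> I0" and J0: "J0 \<in> CP" "j0 \<in> J0"
    by (metis UNIV_I Union_iff)
  have ne: "block A I0 J0 \<noteq> 0"
  proof
    assume "block A I0 J0 = 0"
    hence "block A I0 J0 $ i0 $ j0 = 0" by simp
    thus False using ij I0 J0 unfolding block_def by simp
  qed
  have "0 \<le> (sigma_max (block A I0 J0))^2" by simp
  also have "\<dots> \<le> dsbgs_beta A RP CP * (frob_norm (block A I0 J0))^2" using mem[OF I0(1) J0(1) ne] .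
  finally show "0 \<le> dsbgs_beta A RP CP" using frob_pos[OF ne] by (simp add: zero_le_mult_iff)
qed

lemma per_block:
  fixes A :: "real^'n^'m" and b :: "real^'m" and g :: "'n set \<Rightarrow> real"
  assumes A: "A \<noteq> 0" and P: "partition_on UNIV RP" "partition_on UNIV CP" and al: "0 < \<alpha>"
    and g0: "0 \<le> g J"
    and gb: "\<And>y. (\<And>j. j \<notin> J \<Longrightarrow> y$j = 0) \<Longrightarrow> (norm (A *v y))^2 \<le> g J * (norm y)^2"
    and IJ: "I \<in> RP" "J \<in> CP"
  shows "(norm (A *v dsbgs_step A b \<alpha> I J x - b))^2 * ((frob_norm (block A I J))^2 / (frob_norm A)^2)
    \<le> ((frob_norm (block A I J))^2 / (frob_norm A)^2) * (norm (A *v x - b))^2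
       - 2 * \<alpha> / (frob_norm A)^2 * inner (transpose A *v (A *v x - b)) (transpose (block A I J) *v (A *v x - b))
       + \<alpha>^2 * dsbgs_beta A RP CP / (frob_norm A)^2 * (g J * (norm (rI I (A *v x - b)))^2)"
proof -
  define \<Phi> where "\<Phi> = (frob_norm A)^2"
  define F where "F = (frob_norm (block A I J))^2"
  define \<beta> where "\<beta> = dsbgs_beta A RP CP"
  define r where "r = A *v x - b"
  define y where "y = transpose (block A I J) *v r"
  define v where "v = transpose A *v r"
  define R where "R = (norm (rI I r))^2"
  have Phi: "0 < \<Phi>" unfolding \<Phi>_def using frob_pos[OF A] .
  have b0: "0 \<le> \<beta>" unfolding \<beta>_def using beta_facts(2)[OF A P] .
  have R0: "0 \<le> R" unfolding R_def by simp
  have stepeq: "A *v dsbgs_step A b \<alpha> I J x - b = r + (- (\<alpha> / F)) *\<^sub>R (A *v y)"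
    unfolding dsbgs_step_def r_def y_def F_def
    by (simp add: matrix_vector_mult_diff_distrib matrix_vector_mult_scaleR algebra_simps)
  show ?thesis
  proof (cases "F = 0")
    case True
    hence "block A I J = 0" unfolding F_def using frob_zero by simp
    hence "y = 0" unfolding y_def by (simp add: vec_eq_iff matrix_vector_mult_def transpose_def)
    have "0 \<le> \<alpha>^2 * \<beta> / \<Phi> * (g J * R)" using b0 Phi g0 R0 by simp
    thus ?thesis using True \<open>y = 0\<close>
      unfolding \<Phi>_def[symmetric] F_def[symmetric] \<beta>_def[symmetric] r_def[symmetric] y_def[symmetric]
        R_def[symmetric] by simp
  next
    case False
    hence Fpos: "0 < F" unfolding F_def by simp
    hence Mne: "block A I J \<noteq> 0" unfolding F_def by (auto simp: frob_norm_def)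
    have inn: "inner r (A *v y) = inner v y"
      unfolding v_def using adj[of A y r] by (simp add: inner_commute)
    have Ay: "(norm (A *v y))^2 \<le> g J * (norm y)^2"
      by (rule gb) (unfold y_def, rule Y_supp)
    have "(norm y)^2 \<le> (sigma_max (block A I J))^2 * R"
      unfolding y_def R_def by (subst Y_rI) (rule sigma_max_bound_T)
    also have "\<dots> \<le> (\<beta> * F) * R"
      unfolding \<beta>_def F_def using beta_facts(1)[OF A P IJ Mne] R0 by (rule mult_right_mono)
    finally have yb: "(norm y)^2 \<le> \<beta> * F * R" .
    have Ayb: "(norm (A *v y))^2 \<le> g J * (\<beta> * F * R)"
      using Ay mult_left_mono[OF yb g0] by linarith
    have "(norm (A *v dsbgs_step A b \<alpha> I J x - b))^2 * (F / \<Phi>)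
        = ((norm r)^2 + 2 * (- (\<alpha> / F)) * inner v y + (- (\<alpha> / F))^2 * (norm (A *v y))^2) * (F / \<Phi>)"
      unfolding stepeq norm_expand inn ..
    also have "\<dots> = F / \<Phi> * (norm r)^2 - 2 * \<alpha> / \<Phi> * inner v y + (\<alpha>^2 / (F * \<Phi>)) * (norm (A *v y))^2"
      using Fpos Phi by (simp add: field_simps power2_eq_square)
    also have "\<dots> \<le> F / \<Phi> * (norm r)^2 - 2 * \<alpha> / \<Phi> * inner v y + (\<alpha>^2 / (F * \<Phi>)) * (g J * (\<beta> * F * R))"
      using mult_left_mono[OF Ayb, of "\<alpha>^2 / (F * \<Phi>)"] Fpos Phi by simp
    also have "(\<alpha>^2 / (F * \<Phi>)) * (g J * (\<beta> * F * R)) = \<alpha>^2 * \<beta> / \<Phi> * (g J * R)"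
      using Fpos Phi by (simp add: field_simps power2_eq_square)
    finally show ?thesis
      unfolding \<Phi>_def F_def \<beta>_def r_def y_def v_def R_def .
  qed
qed

lemma one_step:
  fixes A :: "real^'n^'m" and b :: "real^'m" and g :: "'n set \<Rightarrow> real"
  assumes A: "A \<noteq> 0" and cons: "\<exists>x. A *v x = b"
    and P: "partition_on UNIV RP" "partition_on UNIV CP" and al: "0 < \<alpha>"
    and g0: "\<And>J. J \<in> CP \<Longrightarrow> 0 \<le> g J"
    and gb: "\<And>J y. J \<in> CP \<Longrightarrow> (\<And>j. j \<notin> J \<Longrightarrow> y$j = 0) \<Longrightarrow> (norm (A *v y))^2 \<le> g J * (norm y)^2"
  shows "measure_pmf.expectation (block_pmf A RP CP)
      (\<lambda>p. (norm (A *v ((\<lambda>(I, J). dsbgs_step A b \<alpha> I J x) p) - b))^2)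
     \<le> (1 - 2 * \<alpha> * (sigma_min_nz A)^2 / (frob_norm A)^2
          + \<alpha>^2 * dsbgs_beta A RP CP * (\<Sum>J\<in>CP. g J) / (frob_norm A)^2) * (norm (A *v x - b))^2"
proof -
  define \<Phi> where "\<Phi> = (frob_norm A)^2"
  define F where "F = (\<lambda>I J. (frob_norm (block A I J))^2)"
  define \<beta> where "\<beta> = dsbgs_beta A RP CP"
  define r where "r = A *v x - b"
  define Y where "Y = (\<lambda>I J. transpose (block A I J) *v r)"
  define v where "v = transpose A *v r"
  define \<psi> where "\<psi> = (\<lambda>I J. (norm (A *v dsbgs_step A b \<alpha> I J x - b))^2)"
  have Phi: "0 < \<Phi>" unfolding \<Phi>_def using frob_pos[OF A] .
  have "measure_pmf.expectation (block_pmf A RP CP)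
      (\<lambda>p. (norm (A *v ((\<lambda>(I, J). dsbgs_step A b \<alpha> I J x) p) - b))^2)
      = (\<Sum>a\<in>RP \<times> CP. (\<lambda>p. (norm (A *v ((\<lambda>(I, J). dsbgs_step A b \<alpha> I J x) p) - b))^2) a
            * pmf (block_pmf A RP CP) a)"
  proof (rule integral_measure_pmf_real)
    fix a assume "a \<in> set_pmf (block_pmf A RP CP)"
    hence "pmf (block_pmf A RP CP) a \<noteq> 0" by (simp add: set_pmf_iff)
    thus "a \<in> RP \<times> CP" using pmf_block[OF A P, of "fst a" "snd a"] by (cases a) (auto split: if_splits)
  qed simp
  also have "\<dots> = (\<Sum>(I, J)\<in>RP \<times> CP. \<psi> I J * (F I J / \<Phi>))"
    by (intro sum.cong refl) (auto simp: pmf_block[OF A P] \<psi>_def F_def \<Phi>_def)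
  also have "\<dots> = (\<Sum>I\<in>RP. \<Sum>J\<in>CP. \<psi> I J * (F I J / \<Phi>))"
    by (rule sum.cartesian_product[symmetric])
  also have "\<dots> \<le> (\<Sum>I\<in>RP. \<Sum>J\<in>CP. F I J / \<Phi> * (norm r)^2 - 2 * \<alpha> / \<Phi> * inner v (Y I J)
          + \<alpha>^2 * \<beta> / \<Phi> * (g J * (norm (rI I r))^2))"
    unfolding \<psi>_def F_def \<Phi>_def \<beta>_def r_def v_def Y_def
    by (intro sum_mono per_block[OF A P al] g0 gb) auto
  also have "\<dots> = (norm r)^2 * (\<Sum>I\<in>RP. \<Sum>J\<in>CP. F I J) / \<Phi>
        - 2 * \<alpha> / \<Phi> * (\<Sum>I\<in>RP. \<Sum>J\<in>CP. inner v (Y I J))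
        + \<alpha>^2 * \<beta> / \<Phi> * ((\<Sum>I\<in>RP. (norm (rI I r))^2) * (\<Sum>J\<in>CP. g J))"
    by (simp add: sum.distrib sum_subtractf sum_distrib_left sum_distrib_right sum_divide_distrib
        algebra_simps)
  also have "(\<Sum>I\<in>RP. \<Sum>J\<in>CP. F I J) = \<Phi>" unfolding F_def \<Phi>_def by (rule total_F[OF P])
  also have "(\<Sum>I\<in>RP. (norm (rI I r))^2) = (norm r)^2"
    unfolding norm_rI by (simp only: part_sum[OF P(1)] norm_sq_vec)
  also have "(\<Sum>I\<in>RP. \<Sum>J\<in>CP. inner v (Y I J)) = (norm v)^2"
  proof -
    have "(\<Sum>I\<in>RP. \<Sum>J\<in>CP. inner v (Y I J)) = (\<Sum>I\<in>RP. \<Sum>J\<in>CP. \<Sum>i\<in>I. \<Sum>j\<in>J. r$i * A$i$j * v$j)"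
      unfolding Y_def by (simp only: inner_commute[of v] inner_block)
    also have "\<dots> = (\<Sum>i\<in>UNIV. \<Sum>j\<in>UNIV. r$i * A$i$j * v$j)" by (rule sum_blocks[OF P])
    also have "\<dots> = inner (transpose (block A UNIV UNIV) *v r) v" by (simp only: inner_block)
    also have "\<dots> = (norm v)^2" unfolding block_univ v_def by (simp add: power2_norm_eq_inner)
    finally show ?thesis .
  qed
  finally have E: "measure_pmf.expectation (block_pmf A RP CP)
      (\<lambda>p. (norm (A *v ((\<lambda>(I, J). dsbgs_step A b \<alpha> I J x) p) - b))^2)
    \<le> (norm r)^2 * \<Phi> / \<Phi> - 2 * \<alpha> / \<Phi> * (norm v)^2 + \<alpha>^2 * \<beta> / \<Phi> * ((norm r)^2 * (\<Sum>J\<in>CP. g J))" .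
  obtain x1 where x1: "A *v x1 = b" using cons by blast
  have "r \<in> range (\<lambda>x. A *v x)" unfolding r_def using x1
    by (intro range_eqI[of _ _ "x - x1"]) (simp add: matrix_vector_mult_diff_distrib)
  from sigma_min_bound[OF A this] have sv: "(sigma_min_nz A)^2 * (norm r)^2 \<le> (norm v)^2"
    unfolding v_def .
  have "- 2 * \<alpha> / \<Phi> * (norm v)^2 \<le> - 2 * \<alpha> / \<Phi> * ((sigma_min_nz A)^2 * (norm r)^2)"
    using al Phi sv by (intro mult_left_mono_neg) (auto simp: divide_nonneg_pos)
  hence "measure_pmf.expectation (block_pmf A RP CP)
      (\<lambda>p. (norm (A *v ((\<lambda>(I, J). dsbgs_step A b \<alpha> I J x) p) - b))^2)
    \<le> (norm r)^2 * \<Phi> / \<Phi> - 2 * \<alpha> / \<Phi> * ((sigma_min_nz A)^2 * (norm r)^2) + \<alpha>^2 * \<beta> / \<Phi> * ((norm r)^2 * (\<Sum>J\<in>CP. g J))"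
    using E by linarith
  also have "\<dots> = (1 - 2 * \<alpha> * (sigma_min_nz A)^2 / \<Phi> + \<alpha>^2 * \<beta> * (\<Sum>J\<in>CP. g J) / \<Phi>) * (norm r)^2"
    using Phi by (simp add: field_simps)
  finally show ?thesis unfolding \<Phi>_def \<beta>_def r_def .
qed

lemma rho_le:
  assumes "J \<in> CP"
  shows "(sigma_max (block A UNIV J))^2 \<le> dsbgs_rho A CP"
proof -
  have "{(sigma_max (block A UNIV J))^2 | J. J \<in> CP} \<subseteq> (\<lambda>J. (sigma_max (block A UNIV J))^2) ` UNIV"
    by auto
  hence fin: "finite {(sigma_max (block A UNIV J))^2 | J. J \<in> CP}" by (rule finite_subset) simp
  have "(sigma_max (block A UNIV J))^2 \<in> {(sigma_max (block A UNIV J))^2 | J. J \<in> CP}" using assms by blast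
  thus ?thesis unfolding dsbgs_rho_def using fin by simp
qed

theorem theorem4:
  fixes A :: "real^'n^'m" and b :: "real^'m" and x0 :: "real^'n"
    and RP :: "'m set set" and CP :: "'n set set" and \<alpha> :: real
  assumes "A \<noteq> 0"
    and "\<exists>x. A *v x = b"
    and "partition_on UNIV RP"
    and "partition_on UNIV CP"
  shows
    "(card CP = CARD('n) \<and> 0 < \<alpha> \<and>
        \<alpha> < 2 * (sigma_min_nz A)^2 / (dsbgs_beta A RP CP * (frob_norm A)^2) \<longrightarrow>
      (\<forall>k::nat. measure_pmf.expectation (dsbgs_iter A b RP CP \<alpha> x0 k) (\<lambda>x. (norm (A *v x - b))^2)
        \<le> (1 + dsbgs_beta A RP CP * \<alpha>^2 - 2 * \<alpha> * (sigma_min_nz A)^2 / (frob_norm A)^2) ^ k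
           * (norm (A *v x0 - b))^2))
   \<and>
    (card CP < CARD('n) \<and> 0 < \<alpha> \<and>
        \<alpha> < 2 * (sigma_min_nz A)^2 / (real (card CP) * dsbgs_rho A CP * dsbgs_beta A RP CP) \<longrightarrow>
      (\<forall>k::nat. measure_pmf.expectation (dsbgs_iter A b RP CP \<alpha> x0 k) (\<lambda>x. (norm (A *v x - b))^2)
        \<le> (1 - (2 * \<alpha> * (sigma_min_nz A)^2
                 - real (card CP) * dsbgs_rho A CP * dsbgs_beta A RP CP * \<alpha>^2) / (frob_norm A)^2) ^ k
           * (norm (A *v x0 - b))^2))"
proof -
  note A = assms(1) and cons = assms(2) and P = assms(3,4)
  define \<phi> where "\<phi> = (\<lambda>x. (norm (A *v x - b))^2)"
  have Phi: "0 < (frob_norm A)^2" using frob_pos[OF A] .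
  have P1: "partition_on UNIV {UNIV::'m set}" unfolding partition_on_def by (auto simp: disjoint_def)
  show ?thesis
  proof (intro conjI impI)
    assume H: "card CP = CARD('n) \<and> 0 < \<alpha> \<and>
        \<alpha> < 2 * (sigma_min_nz A)^2 / (dsbgs_beta A RP CP * (frob_norm A)^2)"
    define g where "g = (\<lambda>J. (frob_norm (block A UNIV J))^2)"
    have sg: "(\<Sum>J\<in>CP. g J) = (frob_norm A)^2"
      using total_F[OF P1 P(2), of A] unfolding g_def by simp
    have st: "measure_pmf.expectation (block_pmf A RP CP)
      (\<lambda>p. (norm (A *v ((\<lambda>(I, J). dsbgs_step A b \<alpha> I J x) p) - b))^2)
     \<le> (1 + dsbgs_beta A RP CP * \<alpha>^2 - 2 * \<alpha> * (sigma_min_nz A)^2 / (frob_norm A)^2) * (norm (A *v x - b))^2" for x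
    proof -
      have "measure_pmf.expectation (block_pmf A RP CP)
        (\<lambda>p. (norm (A *v ((\<lambda>(I, J). dsbgs_step A b \<alpha> I J x) p) - b))^2)
       \<le> (1 - 2 * \<alpha> * (sigma_min_nz A)^2 / (frob_norm A)^2
          + \<alpha>^2 * dsbgs_beta A RP CP * (\<Sum>J\<in>CP. g J) / (frob_norm A)^2) * (norm (A *v x - b))^2"
      proof (rule one_step[OF A cons P])
        show "0 < \<alpha>" using H by simp
        show "0 \<le> g J" for J unfolding g_def by simp
        fix J and y :: "real^'n" assume "\<And>j. j \<notin> J \<Longrightarrow> y$j = 0"
        hence "A *v y = block A UNIV J *v y" by (rule A_col)
        thus "(norm (A *v y))^2 \<le> g J * (norm y)^2" unfolding g_def using frob_bound by simp
      qed
      also have "(1 - 2 * \<alpha> * (sigma_min_nz A)^2 / (frob_norm A)^2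
          + \<alpha>^2 * dsbgs_beta A RP CP * (\<Sum>J\<in>CP. g J) / (frob_norm A)^2)
        = 1 + dsbgs_beta A RP CP * \<alpha>^2 - 2 * \<alpha> * (sigma_min_nz A)^2 / (frob_norm A)^2"
        unfolding sg using Phi by (simp add: field_simps)
      finally show ?thesis .
    qed
    show "\<forall>k::nat. measure_pmf.expectation (dsbgs_iter A b RP CP \<alpha> x0 k) (\<lambda>x. (norm (A *v x - b))^2)
        \<le> (1 + dsbgs_beta A RP CP * \<alpha>^2 - 2 * \<alpha> * (sigma_min_nz A)^2 / (frob_norm A)^2) ^ k
           * (norm (A *v x0 - b))^2"
      using iter_bound[OF st] by blast
  next
    assume H: "card CP < CARD('n) \<and> 0 < \<alpha> \<and>
        \<alpha> < 2 * (sigma_min_nz A)^2 / (real (card CP) * dsbgs_rho A CP * dsbgs_beta A RP CP)"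
    define g where "g = (\<lambda>J::'n set. dsbgs_rho A CP)"
    have sg: "(\<Sum>J\<in>CP. g J) = real (card CP) * dsbgs_rho A CP" unfolding g_def by simp
    have st: "measure_pmf.expectation (block_pmf A RP CP)
      (\<lambda>p. (norm (A *v ((\<lambda>(I, J). dsbgs_step A b \<alpha> I J x) p) - b))^2)
     \<le> (1 - (2 * \<alpha> * (sigma_min_nz A)^2
                 - real (card CP) * dsbgs_rho A CP * dsbgs_beta A RP CP * \<alpha>^2) / (frob_norm A)^2)
        * (norm (A *v x - b))^2" for x
    proof -
      have "measure_pmf.expectation (block_pmf A RP CP)
        (\<lambda>p. (norm (A *v ((\<lambda>(I, J). dsbgs_step A b \<alpha> I J x) p) - b))^2)
       \<le> (1 - 2 * \<alpha> * (sigma_min_nz A)^2 / (frob_norm A)^2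
          + \<alpha>^2 * dsbgs_beta A RP CP * (\<Sum>J\<in>CP. g J) / (frob_norm A)^2) * (norm (A *v x - b))^2"
      proof (rule one_step[OF A cons P])
        show "0 < \<alpha>" using H by simp
        show "0 \<le> g J" if "J \<in> CP" for J
        proof -
          have "0 \<le> (sigma_max (block A UNIV J))^2" by simp
          also have "\<dots> \<le> dsbgs_rho A CP" using rho_le[OF that] .
          finally show ?thesis unfolding g_def .
        qed
        fix J and y :: "real^'n" assume J: "J \<in> CP" and "\<And>j. j \<notin> J \<Longrightarrow> y$j = 0"
        hence "A *v y = block A UNIV J *v y" by (intro A_col)
        hence "(norm (A *v y))^2 \<le> (sigma_max (block A UNIV J))^2 * (norm y)^2"
          using sigma_max_bound(1) by simp
        also have "\<dots> \<le> dsbgs_rho A CP * (norm y)^2"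
          using rho_le[OF J] by (rule mult_right_mono) simp
        finally show "(norm (A *v y))^2 \<le> g J * (norm y)^2" unfolding g_def .
      qed
      also have "(1 - 2 * \<alpha> * (sigma_min_nz A)^2 / (frob_norm A)^2
          + \<alpha>^2 * dsbgs_beta A RP CP * (\<Sum>J\<in>CP. g J) / (frob_norm A)^2)
        = (1 - (2 * \<alpha> * (sigma_min_nz A)^2
                 - real (card CP) * dsbgs_rho A CP * dsbgs_beta A RP CP * \<alpha>^2) / (frob_norm A)^2)"
        unfolding sg using Phi by (simp add: field_simps)
      finally show ?thesis .
    qed
    show "\<forall>k::nat. measure_pmf.expectation (dsbgs_iter A b RP CP \<alpha> x0 k) (\<lambda>x. (norm (A *v x - b))^2)
        \<le> (1 - (2 * \<alpha> * (sigma_min_nz A)^2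
                 - real (card CP) * dsbgs_rho A CP * dsbgs_beta A RP CP * \<alpha>^2) / (frob_norm A)^2) ^ k
           * (norm (A *v x0 - b))^2"
      using iter_bound[OF st] by blast
  qed
qed

end
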